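(* Let $A$ be an observable on $\mathbb C^d$ with orthonormal eigenbasis $\{\varphi_k\}_{k=0}^{d-1}$, let $\Phi$ be a unit vector and $p_k=|\langle\varphi_k,\Phi\rangle|^2$. Then for every unit vector $\Psi\in\mathbb C^d$, $$d(T_{A\Phi}\Psi,\Phi)\le 2\min_k d(\Phi,\varphi_k)=2\sqrt2\,\sqrt{1-\max_k\sqrt{p_k}}.$$
   Context: $\mathcal H=\mathbb C^d$ with the standard inner product; states are unit vectors. An observable $A$ is non-degenerate and identified with its orthonormal eigenbasis $\{\varphi_k\}_{k=0}^{d-1}$. Bures metric: $d(\Phi,\Psi)=\sqrt{2-2|\langle\Phi,\Psi\rangle|}$. Physical imposition operator: $T_{A\Phi}\Psi=\sum_{k=0}^{d-1}|\langle\varphi_k,\Phi\rangle|\,u_k(\Psi)\,\varphi_k$, where $u_k(\Psi)=\langle\varphi_k,\Psi\rangle/|\langle\varphi_k,\Psi\rangle|$ if $\langle\varphi_k,\Psi\rangle\ne0$ and $u_k(\Psi)=1$ otherwise. *)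

theory Defs
  imports "HOL-Analysis.Analysis"
begin

text \<open>Vectors of C^d are modelled as complex^'n with d = CARD('n).
  Standard inner product, conjugate-linear in the first argument.\<close>
definition cinner :: "complex^'n \<Rightarrow> complex^'n \<Rightarrow> complex" where
  "cinner x y = (\<Sum>i\<in>UNIV. cnj (x $ i) * y $ i)"

definition unit_vec :: "complex^'n \<Rightarrow> bool" where
  "unit_vec x \<longleftrightarrow> cinner x x = 1"

definition orthonormal_basis :: "('n \<Rightarrow> complex^'n) \<Rightarrow> bool" where
  "orthonormal_basis \<phi> \<longleftrightarrow>
     (\<forall>j k. cinner (\<phi> j) (\<phi> k) = (if j = k then 1 else 0))"

definition bures :: "complex^'n \<Rightarrow> complex^'n \<Rightarrow> real" where
  "bures \<Phi> \<Psi> = sqrt (2 - 2 * cmod (cinner \<Phi> \<Psi>))"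

definition uphase :: "('n \<Rightarrow> complex^'n) \<Rightarrow> 'n \<Rightarrow> complex^'n \<Rightarrow> complex" where
  "uphase \<phi> k \<Psi> =
     (if cinner (\<phi> k) \<Psi> \<noteq> 0 then cinner (\<phi> k) \<Psi> / complex_of_real (cmod (cinner (\<phi> k) \<Psi>))
      else 1)"

text \<open>Physical imposition operator T_{A Phi}, A identified with its eigenbasis phi\<close>
definition imposition :: "('n \<Rightarrow> complex^'n) \<Rightarrow> complex^'n \<Rightarrow> complex^'n \<Rightarrow> complex^'n" where
  "imposition \<phi> \<Phi> \<Psi> =
     (\<chi> i. \<Sum>k\<in>UNIV. complex_of_real (cmod (cinner (\<phi> k) \<Phi>)) * uphase \<phi> k \<Psi> * (\<phi> k $ i))"

end

theory Submission imports Defs begin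

lemma completeness:
  fixes \<phi> :: "'n::finite \<Rightarrow> complex^'n"
  assumes "orthonormal_basis \<phi>"
  shows "(\<Sum>k\<in>UNIV. \<phi> k $ i * cnj (\<phi> k $ l)) = (if i = l then 1 else 0)"
proof -
  define B :: "complex^'n^'n" where "B = (\<chi> j i. cnj (\<phi> j $ i))"
  define C :: "complex^'n^'n" where "C = (\<chi> i k. \<phi> k $ i)"
  have "B ** C = mat 1"
    using assms unfolding orthonormal_basis_def cinner_def
    by (simp add: B_def C_def matrix_matrix_mult_def mat_def vec_eq_iff)
  hence "C ** B = mat 1" using matrix_left_right_inverse by blast
  hence "(C ** B) $ i $ l = mat 1 $ i $ l" by simp
  thus ?thesis by (simp add: B_def C_def matrix_matrix_mult_def mat_def)
qed

lemma parseval: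
  fixes \<phi> :: "'n::finite \<Rightarrow> complex^'n"
  assumes "orthonormal_basis \<phi>" "unit_vec \<Phi>"
  shows "(\<Sum>k\<in>UNIV. (cmod (cinner (\<phi> k) \<Phi>))^2) = 1"
proof -
  have "complex_of_real (\<Sum>k\<in>UNIV. (cmod (cinner (\<phi> k) \<Phi>))^2)
      = (\<Sum>k\<in>UNIV. cnj (cinner (\<phi> k) \<Phi>) * cinner (\<phi> k) \<Phi>)"
    proof -
    have e: "\<And>z::complex. complex_of_real ((cmod z)^2) = cnj z * z"
      by (metis complex_norm_square mult.commute of_real_power)
    show ?thesis by (simp only: of_real_sum e)
  qed
  also have "\<dots> = (\<Sum>k\<in>UNIV. (\<Sum>i\<in>UNIV. \<phi> k $ i * cnj (\<Phi> $ i)) * (\<Sum>l\<in>UNIV. cnj (\<phi> k $ l) * \<Phi> $ l))"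
    by (simp add: cinner_def)
  also have "\<dots> = (\<Sum>i\<in>UNIV. \<Sum>l\<in>UNIV. cnj (\<Phi> $ i) * \<Phi> $ l * (\<Sum>k\<in>UNIV. \<phi> k $ i * cnj (\<phi> k $ l)))"
  proof -
    have "(\<Sum>k\<in>UNIV. (\<Sum>i\<in>UNIV. \<phi> k $ i * cnj (\<Phi> $ i)) * (\<Sum>l\<in>UNIV. cnj (\<phi> k $ l) * \<Phi> $ l))
       = (\<Sum>k\<in>UNIV. \<Sum>i\<in>UNIV. \<Sum>l\<in>UNIV. (\<phi> k $ i * cnj (\<Phi> $ i)) * (cnj (\<phi> k $ l) * \<Phi> $ l))"
      by (simp only: sum_product)
    also have "\<dots> = (\<Sum>i\<in>UNIV. \<Sum>k\<in>UNIV. \<Sum>l\<in>UNIV. (\<phi> k $ i * cnj (\<Phi> $ i)) * (cnj (\<phi> k $ l) * \<Phi> $ l))"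
      by (rule sum.swap)
    also have "\<dots> = (\<Sum>i\<in>UNIV. \<Sum>l\<in>UNIV. \<Sum>k\<in>UNIV. (\<phi> k $ i * cnj (\<Phi> $ i)) * (cnj (\<phi> k $ l) * \<Phi> $ l))"
      by (rule sum.cong[OF refl], rule sum.swap)
    also have "\<dots> = (\<Sum>i\<in>UNIV. \<Sum>l\<in>UNIV. cnj (\<Phi> $ i) * \<Phi> $ l * (\<Sum>k\<in>UNIV. \<phi> k $ i * cnj (\<phi> k $ l)))"
      by (simp only: sum_distrib_left mult_ac)
    finally show ?thesis .
  qed
  also have "\<dots> = (\<Sum>i\<in>UNIV. cnj (\<Phi> $ i) * \<Phi> $ i)"
    by (simp add: completeness[OF assms(1)] if_distrib[of "\<lambda>x. _ * x"] cong: if_cong)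
  also have "\<dots> = 1" using assms(2) by (simp add: unit_vec_def cinner_def)
  finally show ?thesis using of_real_eq_1_iff by blast
qed

lemma cinner_cnj: "cinner x y = cnj (cinner y x)"
  by (simp add: cinner_def cnj_sum mult.commute)

lemma uphase_norm: "cmod (uphase \<phi> k \<Psi>) = 1"
  by (simp add: uphase_def norm_divide)

lemma inner_T:
  "cinner (imposition \<phi> \<Phi> \<Psi>) \<Phi> = (\<Sum>k\<in>UNIV. complex_of_real (cmod (cinner (\<phi> k) \<Phi>)) * cnj (uphase \<phi> k \<Psi>) * cinner (\<phi> k) \<Phi>)"
proof -
  have "cinner (imposition \<phi> \<Phi> \<Psi>) \<Phi> = (\<Sum>i\<in>UNIV. \<Sum>k\<in>UNIV. complex_of_real (cmod (cinner (\<phi> k) \<Phi>)) * cnj (uphase \<phi> k \<Psi>) * (cnj (\<phi> k $ i) * \<Phi> $ i))"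
    unfolding cinner_def[of "imposition \<phi> \<Phi> \<Psi>"]
    by (rule sum.cong[OF refl]) (simp add: imposition_def cnj_sum sum_distrib_right sum_distrib_left mult_ac)
  also have "\<dots> = (\<Sum>k\<in>UNIV. \<Sum>i\<in>UNIV. complex_of_real (cmod (cinner (\<phi> k) \<Phi>)) * cnj (uphase \<phi> k \<Psi>) * (cnj (\<phi> k $ i) * \<Phi> $ i))"
    by (rule sum.swap)
  also have "\<dots> = (\<Sum>k\<in>UNIV. complex_of_real (cmod (cinner (\<phi> k) \<Phi>)) * cnj (uphase \<phi> k \<Psi>) * cinner (\<phi> k) \<Phi>)"
    by (simp only: cinner_def sum_distrib_left)
  finally show ?thesis .
qed

theorem proposition2:
  fixes \<phi> :: "'n::finite \<Rightarrow> complex^'n" and \<Phi> \<Psi> :: "complex^'n"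
  assumes "orthonormal_basis \<phi>"
    and "unit_vec \<Phi>"
    and "unit_vec \<Psi>"
  defines "p \<equiv> (\<lambda>k. (cmod (cinner (\<phi> k) \<Phi>))^2)"
  shows "bures (imposition \<phi> \<Phi> \<Psi>) \<Phi> \<le> 2 * Min (range (\<lambda>k. bures \<Phi> (\<phi> k)))
         \<and> 2 * Min (range (\<lambda>k. bures \<Phi> (\<phi> k)))
             = 2 * sqrt 2 * sqrt (1 - Max (range (\<lambda>k. sqrt (p k))))"
proof -
  define a where "a = (\<lambda>k. cmod (cinner (\<phi> k) \<Phi>))"
  define t where "t = (\<lambda>k. complex_of_real (cmod (cinner (\<phi> k) \<Phi>)) * cnj (uphase \<phi> k \<Psi>) * cinner (\<phi> k) \<Phi>)"
  have a0: "\<And>k. a k \<ge> 0" by (simp add: a_def)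
  have pars: "(\<Sum>k\<in>UNIV. (a k)^2) = 1" using parseval[OF assms(1,2)] by (simp add: a_def)
  have fin: "finite (range a)" by simp
  have "Max (range a) \<in> range a" using fin by (intro Max_in) auto
  then obtain m where am: "a m = Max (range a)" by (metis rangeE)
  have mx: "\<And>k. a k \<le> a m" using fin am by simp
  have tn: "\<And>k. cmod (t k) = (a k)^2"
    by (simp add: t_def a_def norm_mult uphase_norm power2_eq_square)
  have rest: "(\<Sum>k\<in>UNIV-{m}. (a k)^2) = 1 - (a m)^2"
    using pars sum.remove[of UNIV m "\<lambda>k. (a k)^2"] by simp
  have restnn: "(\<Sum>k\<in>UNIV-{m}. (a k)^2) \<ge> 0" by (simp add: sum_nonneg)
  have am1: "a m \<le> 1"
  proof -
    have "(a m)^2 \<le> 1" using rest restnn by linarith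
    thus ?thesis using a0[of m] by (simp add: power_le_one_iff abs_square_le_1)
  qed
  have S: "cinner (imposition \<phi> \<Phi> \<Psi>) \<Phi> = t m + (\<Sum>k\<in>UNIV-{m}. t k)"
    unfolding inner_T t_def using sum.remove[of UNIV m] by simp
  have "cmod (\<Sum>k\<in>UNIV-{m}. t k) \<le> (\<Sum>k\<in>UNIV-{m}. cmod (t k))" by (rule norm_sum)
  hence "cmod (\<Sum>k\<in>UNIV-{m}. t k) \<le> 1 - (a m)^2" using rest tn by simp
  moreover have "cmod (t m) - cmod (\<Sum>k\<in>UNIV-{m}. t k) \<le> cmod (cinner (imposition \<phi> \<Phi> \<Psi>) \<Phi>)"
    unfolding S by (rule norm_diff_ineq)
  ultimately have low: "cmod (cinner (imposition \<phi> \<Phi> \<Psi>) \<Phi>) \<ge> 2 * (a m)^2 - 1"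
    using tn[of m] by linarith
  have "2 * (a m)^2 - 1 \<ge> 4 * a m - 3"
  proof -
    have "0 \<le> 2 * (a m - 1)^2" by simp
    thus ?thesis by (simp add: power2_eq_square algebra_simps)
  qed
  hence c4: "4 * a m - 3 \<le> cmod (cinner (imposition \<phi> \<Phi> \<Psi>) \<Phi>)" using low by linarith
  have le: "2 - 2 * cmod (cinner (imposition \<phi> \<Phi> \<Psi>) \<Phi>) \<le> 4 * (2 - 2 * a m)" using c4 by (simp add: algebra_simps)
  have bk: "\<And>k. bures \<Phi> (\<phi> k) = sqrt (2 - 2 * a k)"
    by (simp add: bures_def a_def cinner_cnj[of \<Phi>])
  have Mn: "Min (range (\<lambda>k. bures \<Phi> (\<phi> k))) = sqrt (2 - 2 * a m)"
    by (rule Min_eqI) (auto simp: bk mx)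
  have Mx: "Max (range (\<lambda>k. sqrt (p k))) = a m"
  proof -
    have "(\<lambda>k. sqrt (p k)) = a" by (auto simp: p_def a_def)
    thus ?thesis using am by metis
  qed
  have "bures (imposition \<phi> \<Phi> \<Psi>) \<Phi> \<le> sqrt (4 * (2 - 2 * a m))"
    unfolding bures_def using le by (rule real_sqrt_le_mono)
  also have "\<dots> = sqrt 4 * sqrt (2 - 2 * a m)" by (simp only: real_sqrt_mult)
  also have "\<dots> = 2 * sqrt (2 - 2 * a m)" by simp
  finally have part1: "bures (imposition \<phi> \<Phi> \<Psi>) \<Phi> \<le> 2 * Min (range (\<lambda>k. bures \<Phi> (\<phi> k)))"
    using Mn by simp
  have "sqrt (2 - 2 * a m) = sqrt 2 * sqrt (1 - a m)"
    by (simp add: real_sqrt_mult[symmetric] algebra_simps)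
  thus ?thesis using part1 Mn Mx by simp
qed

end
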